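(* Let $d\ge2$ and $L\ge1$ be integers. Then (i) $\displaystyle\int_{-1}^1R_L(t)^2(1-t^2)^{d/2-1}\,dt=\frac{|\mathbb{S}^d|}{|\mathbb{S}^{d-1}|}\left(\binom{d+L}{d}+\binom{d+L-1}{d}\right)$; (ii) $\displaystyle\int_{-1}^1R_L(t)^2t^2(1-t^2)^{d/2-1}\,dt=\frac{|\mathbb{S}^d|}{|\mathbb{S}^{d-1}|}\left\{\frac{d(L+1)}{L(d+2L+1)}+\frac{d+4L-2}{d+2L-1}\right\}\binom{d+L-1}{d}$.
   Context: $C_\ell^{((d-1)/2)}$ is the Gegenbauer polynomial of degree $\ell$ (orthogonal on $[-1,1]$ w.r.t. $(1-x^2)^{d/2-1}$), $Q_\ell(x)=\frac{d+2\ell-1}{d-1}C_\ell^{((d-1)/2)}(x)$, and $R_L(x)=\sum_{\ell=0}^LQ_\ell(x)$. $|\mathbb{S}^d|=2\pi^{(d+1)/2}/\Gamma(\frac{d+1}{2})$ is the surface area of the unit sphere $\mathbb{S}^d\subset\mathbb{R}^{d+1}$. *)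

theory Defs
  imports "HOL-Analysis.Analysis"
begin

text \<open>Gegenbauer polynomial C_n^(lam)(x), via the standard explicit formula
  C_n^(lam)(x) = sum_{k=0}^{floor(n/2)} (-1)^k Gamma(n-k+lam)/(Gamma(lam) k! (n-2k)!) (2x)^(n-2k),
  where Gamma(n-k+lam)/Gamma(lam) is the rising factorial (lam)_(n-k).\<close>
definition gegenbauer :: "nat \<Rightarrow> real \<Rightarrow> real \<Rightarrow> real" where
  "gegenbauer n lam x =
     (\<Sum>k\<le>n div 2. (-1)^k * pochhammer lam (n - k) / (fact k * fact (n - 2*k)) * (2*x)^(n - 2*k))"

definition Q_poly :: "nat \<Rightarrow> nat \<Rightarrow> real \<Rightarrow> real" where
  "Q_poly d l x = (real d + 2 * real l - 1) / (real d - 1) * gegenbauer l ((real d - 1) / 2) x"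

definition R_poly :: "nat \<Rightarrow> nat \<Rightarrow> real \<Rightarrow> real" where
  "R_poly d L x = (\<Sum>l\<le>L. Q_poly d l x)"

text \<open>Surface area of the unit sphere S^d in R^(d+1).\<close>
definition sphere_area :: "nat \<Rightarrow> real" where
  "sphere_area d = 2 * pi powr ((real d + 1) / 2) / Gamma ((real d + 1) / 2)"

end

theory Submission
  imports Defs
begin

definition Ak :: "real \<Rightarrow> nat \<Rightarrow> nat \<Rightarrow> real" where
  "Ak lam n k = (if 2*k \<le> n then (-1)^k * pochhammer lam (n-k) / (fact k * fact (n-2*k)) else 0)"

lemma geg_sum:
  assumes "n \<le> N"
  shows "gegenbauer n lam x = (\<Sum>k\<le>N. Ak lam n k * (2*x)^(n-2*k))"
  unfolding gegenbauer_def
proof (rule sum.mono_neutral_cong_right[symmetric])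
  show "finite {..N}" by simp
  show "{..n div 2} \<subseteq> {..N}" using assms by auto
  show "\<forall>k\<in>{..N} - {..n div 2}. Ak lam n k * (2 * x) ^ (n - 2 * k) = 0"
    by (auto simp: Ak_def)
  show "Ak lam n k * (2 * x) ^ (n - 2 * k) =
         (- 1) ^ k * pochhammer lam (n - k) / (fact k * fact (n - 2 * k)) * (2 * x) ^ (n - 2 * k)"
    if "k \<in> {..n div 2}" for k using that by (auto simp: Ak_def)
qed

lemma Ak_rec:
  "real (n+2) * Ak lam (n+2) k = (real n + 1 + lam) * Ak lam (n+1) k
     - (real n + 2*lam) * (if k = 0 then 0 else Ak lam n (k-1))"
proof (cases k)
  case 0
  then show ?thesis
  proof -
    have a: "fact (Suc (Suc n)) = real (n+2) * (real (n+1) * fact n)" "fact (Suc n) = real (n+1) * fact n"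
      by (simp_all add: algebra_simps)
    have b: "pochhammer lam (Suc (Suc n)) = pochhammer lam n * (lam + real n) * (lam + real n + 1)"
        "pochhammer lam (Suc n) = pochhammer lam n * (lam + real n)"
      by (simp_all add: pochhammer_Suc numeral_2_eq_2 algebra_simps)
    have "fact n \<noteq> (0::real)" by simp
    then show ?thesis using 0 unfolding Ak_def
      by (simp add: a b field_simps del: of_nat_Suc of_nat_add fact_Suc)
  qed
next
  case (Suc j)
  show ?thesis
  proof (cases "2*j \<le> n")
    case True
    then obtain m where n: "n = 2*j + m" by (metis le_add_diff_inverse)
    have p1: "pochhammer lam (Suc (j+m)) = pochhammer lam (j+m) * (lam + real (j+m))"
      by (simp add: pochhammer_Suc)
    show ?thesis
    proof (cases m)
      case 0
      have f2: "fact (Suc j) = real (Suc j) * fact j" by simp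
      have e1: "2 * j + 2 - Suc j = Suc j" by simp
      have e3: "2 * j - j = j" by simp
      have p0: "pochhammer lam (Suc j) = pochhammer lam j * (lam + real j)"
        by (simp add: pochhammer_Suc)
      show ?thesis using \<open>k = Suc j\<close> n 0
        apply (simp add: Ak_def e1 e3 p0 f2 del: fact_Suc)
        apply (simp add: divide_simps)
        apply (simp add: algebra_simps)
        done
    next
      case (Suc i)
      define P where "P = pochhammer lam (j+m)"
      define F where "F = (fact i :: real)"
      define G where "G = (fact j :: real)"
      have FG: "F > 0" "G > 0" unfolding F_def G_def by simp_all
      have A1: "Ak lam (n+2) (Suc j) = (-1)^(Suc j) * (P * (lam + real j + real m)) / ((real j+1)*G*(real m*F))"
      proof -
        have "n + 2 - Suc j = Suc (j+m)" "n + 2 - 2 * Suc j = m" using n by simp_all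
        moreover have "fact m = real m * F" using Suc F_def by simp
        ultimately show ?thesis using n unfolding Ak_def P_def G_def
          by (simp add: pochhammer_Suc algebra_simps)
      qed
      have A2: "Ak lam (n+1) (Suc j) = (-1)^(Suc j) * P / ((real j+1)*G*F)"
      proof -
        have "n + 1 - Suc j = j+m" "n + 1 - 2 * Suc j = i" using n Suc by simp_all
        then show ?thesis using n Suc unfolding Ak_def P_def G_def F_def
          by (simp add: algebra_simps)
      qed
      have A3: "Ak lam n j = (-1)^j * P / (G*(real m*F))"
      proof -
        have "n - j = j+m" "n - 2 * j = m" using n by simp_all
        moreover have "fact m = real m * F" using Suc F_def by simp
        ultimately show ?thesis using n unfolding Ak_def P_def G_def
          by (simp add: algebra_simps)
      qed
      have mp: "real m > 0" using Suc by simp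
      have jp: "real j + 1 \<noteq> 0" "1 + real j \<noteq> 0" by linarith+
      have "F \<noteq> 0" "G \<noteq> 0" "real m \<noteq> 0" using FG mp by auto
      show ?thesis unfolding \<open>k = Suc j\<close> using jp
        apply (simp only: A1 A2 A3 if_False nat.distinct diff_Suc_1)
        apply (simp add: divide_simps n)
        using Suc apply (simp add: algebra_simps)
        done
    qed
  next
    case False
    then show ?thesis using Suc by (simp add: Ak_def)
  qed
qed

lemma geg_0 [simp]: "gegenbauer 0 lam x = 1"
  by (simp add: gegenbauer_def)

lemma geg_1 [simp]: "gegenbauer 1 lam x = 2 * lam * x"
  by (simp add: gegenbauer_def)

lemma geg_rec:
  "real (n+2) * gegenbauer (n+2) lam x =
     2 * (real n + 1 + lam) * x * gegenbauer (n+1) lam x - (real n + 2*lam) * gegenbauer n lam x"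
proof -
  define y where "y = 2*x"
  have "real (n+2) * gegenbauer (n+2) lam x = (\<Sum>k\<le>n+2. real (n+2) * Ak lam (n+2) k * y^(n+2-2*k))"
    by (simp only: geg_sum[OF order_refl] sum_distrib_left y_def mult.assoc)
  also have "\<dots> = (\<Sum>k\<le>n+2. (real n + 1 + lam) * (Ak lam (n+1) k * y^(n+2-2*k))
        - (real n + 2*lam) * ((if k = 0 then 0 else Ak lam n (k-1)) * y^(n+2-2*k)))"
    by (rule sum.cong[OF refl]) (simp only: Ak_rec left_diff_distrib mult.assoc)
  also have "\<dots> = (real n + 1 + lam) * (\<Sum>k\<le>n+2. Ak lam (n+1) k * y^(n+2-2*k))
        - (real n + 2*lam) * (\<Sum>k\<le>n+2. (if k = 0 then 0 else Ak lam n (k-1)) * y^(n+2-2*k))"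
    by (simp only: sum_subtractf sum_distrib_left)
  also have "(\<Sum>k\<le>n+2. Ak lam (n+1) k * y^(n+2-2*k)) = y * (\<Sum>k\<le>n+2. Ak lam (n+1) k * y^(n+1-2*k))"
    unfolding sum_distrib_left
  proof (rule sum.cong[OF refl])
    fix k assume "k \<in> {..n+2}"
    show "Ak lam (n+1) k * y^(n+2-2*k) = y * (Ak lam (n+1) k * y^(n+1-2*k))"
    proof (cases "2*k \<le> n+1")
      case True
      then have "n+2-2*k = Suc (n+1-2*k)" by simp
      then show ?thesis by simp
    next
      case False
      then show ?thesis by (simp add: Ak_def)
    qed
  qed
  also have "(\<Sum>k\<le>n+2. Ak lam (n+1) k * y^(n+1-2*k)) = gegenbauer (n+1) lam x"
    by (simp only: geg_sum[of "n+1" "n+2"] y_def le_add1 add_le_mono)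
  also have "(\<Sum>k\<le>n+2. (if k = 0 then 0 else Ak lam n (k-1)) * y^(n+2-2*k))
      = (\<Sum>k\<le>n+1. Ak lam n k * y^(n-2*k))"
    by (simp add: sum.atMost_Suc_shift del: sum.atMost_Suc)
  also have "\<dots> = gegenbauer n lam x"
    by (simp only: geg_sum[of "n" "n+1"] y_def le_add1)
  finally show ?thesis by (simp add: y_def algebra_simps)
qed

definition C1 :: "real \<Rightarrow> nat \<Rightarrow> real \<Rightarrow> real" where
  "C1 lam n x = (\<Sum>k\<le>n. Ak lam n k * (real (n-2*k) * 2 * (2*x)^(n-2*k-1)))"

definition C2 :: "real \<Rightarrow> nat \<Rightarrow> real \<Rightarrow> real" where
  "C2 lam n x = (\<Sum>k\<le>n. Ak lam n k * (real (n-2*k) * real (n-2*k-1) * 4 * (2*x)^(n-2*k-2)))"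

lemma deriv_pow2: "((\<lambda>x. (2*x)^m) has_real_derivative real m * 2 * (2*x)^(m-1)) (at x within S)"
proof -
  have "((\<lambda>x. 2*x) has_real_derivative 2) (at x within S)"
    using DERIV_cmult_Id by blast
  from DERIV_power[OF this, of m] show ?thesis by (simp add: mult.assoc)
qed

lemma deriv_geg: "((\<lambda>x. gegenbauer n lam x) has_real_derivative C1 lam n x) (at x within S)"
proof -
  have "((\<lambda>x. \<Sum>k\<le>n. Ak lam n k * (2*x)^(n-2*k)) has_real_derivative C1 lam n x) (at x within S)"
    unfolding C1_def by (intro DERIV_sum DERIV_cmult deriv_pow2)
  then show ?thesis by (simp only: geg_sum[OF order_refl])
qed

lemma deriv_C1: "((\<lambda>x. C1 lam n x) has_real_derivative C2 lam n x) (at x within S)"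
proof -
  have "((\<lambda>x. C1 lam n x) has_real_derivative
     (\<Sum>k\<le>n. Ak lam n k * ((real (n-2*k) * 2) * (real (n-2*k-1) * 2 * (2*x)^(n-2*k-1-1))))) (at x within S)"
    unfolding C1_def by (intro DERIV_sum DERIV_cmult deriv_pow2)
  moreover have "(\<Sum>k\<le>n. Ak lam n k * ((real (n-2*k) * 2) * (real (n-2*k-1) * 2 * (2*x)^(n-2*k-1-1))))
      = C2 lam n x"
    unfolding C2_def by (rule sum.cong[OF refl]) (simp add: algebra_simps)
  ultimately show ?thesis by simp
qed

lemma ode_term:
  fixes y :: real
  shows "Ak lam n k * (real (n-2*k) * real (n-2*k-1) * 4 * y^(n-2*k-2)) * (1 - (y/2)^2)
    - (2*lam+1)*(y/2)*(Ak lam n k * (real (n-2*k)*2*y^(n-2*k-1)))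
    + real n*(real n+2*lam)*(Ak lam n k * y^(n-2*k))
    = 4*Ak lam n k*real(n-2*k)*real(n-2*k-1)*y^(n-2*k-2)
      + 4*real k*(real n - real k + lam)*Ak lam n k*y^(n-2*k)"
proof (cases "2*k \<le> n")
  case False
  then show ?thesis by (simp add: Ak_def)
next
  case True
  then obtain m where n: "n = 2*k + m" by (metis le_add_diff_inverse)
  show ?thesis
  proof (cases m)
    case 0
    then show ?thesis using n by (simp add: algebra_simps)
  next
    case (Suc i)
    show ?thesis
    proof (cases i)
      case 0
      then show ?thesis using n Suc by (simp add: algebra_simps)
    next
      case (Suc j)
      have "y^(n-2*k) = y*y*y^j" "y^(n-2*k-1) = y*y^j" "y^(n-2*k-2) = y^j"
        using n Suc \<open>m = Suc i\<close> by simp_all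
      moreover have "real (n-2*k) = real j + 2" "real (n-2*k-1) = real j + 1" "real n = 2*real k + real j + 2"
        using n Suc \<open>m = Suc i\<close> by simp_all
      ultimately show ?thesis by (simp add: power2_eq_square algebra_simps)
    qed
  qed
qed

lemma ode_UV:
  fixes y :: real
  shows "4*Ak lam n k*real(n-2*k)*real(n-2*k-1)*y^(n-2*k-2)
    = -(4*real (Suc k)*(real n - real (Suc k) + lam)*Ak lam n (Suc k)*y^(n-2*Suc k))"
proof (cases "2*k+2 \<le> n")
  case False
  then have "Ak lam n (Suc k) = 0" by (simp add: Ak_def)
  moreover have "Ak lam n k*real(n-2*k)*real(n-2*k-1) = 0"
  proof (cases "2*k \<le> n")
    case True
    with False have "n - 2*k = 0 \<or> n-2*k-1 = 0" by linarith
    then show ?thesis by auto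
  next
    case False
    then show ?thesis by (simp add: Ak_def)
  qed
  ultimately show ?thesis by simp
next
  case True
  then obtain i where n: "n = 2*k + 2 + i" by (metis le_add_diff_inverse)
  define P where "P = pochhammer lam (k+i+1)"
  define F where "F = (fact i :: real)"
  define G where "G = (fact k :: real)"
  have FG: "F \<noteq> 0" "G \<noteq> 0" unfolding F_def G_def by simp_all
  have A1: "Ak lam n k = (-1)^k * (P * (lam + real k + real i + 1)) / (G * ((real i + 2) * (real i + 1) * F))"
  proof -
    have "n - k = Suc (k+i+1)" "n - 2 * k = Suc (Suc i)" using n by simp_all
    then show ?thesis using n unfolding Ak_def P_def G_def F_def
      by (simp add: pochhammer_Suc algebra_simps)
  qed
  have A2: "Ak lam n (Suc k) = (-1)^(Suc k) * P / ((real k + 1) * G * F)"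
  proof -
    have "n - Suc k = k+i+1" "n - 2 * Suc k = i" using n by simp_all
    then show ?thesis using n unfolding Ak_def P_def G_def F_def
      by (simp add: algebra_simps)
  qed
  have e: "real(n-2*k) = real i + 2" "real(n-2*k-1) = real i + 1" "n-2*k-2 = n - 2*Suc k"
     "real n = 2*real k + real i + 2" using n by simp_all
  have jp: "real k + 1 \<noteq> 0" "real i + 1 \<noteq> 0" "real i + 2 \<noteq> 0" by linarith+
  show ?thesis
    apply (simp only: A1 A2 e)
    using FG jp apply (simp add: divide_simps)
    apply (simp add: algebra_simps)
    done
qed

lemma geg_ode:
  "(1 - x^2) * C2 lam n x - (2*lam+1) * x * C1 lam n x + real n * (real n + 2*lam) * gegenbauer n lam x = 0"
proof -
  define y where "y = 2*x"
  have x: "x = y/2" unfolding y_def by simp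
  define V where "V k = 4*real k*(real n - real k + lam)*Ak lam n k*y^(n-2*k)" for k
  have "(1 - x^2) * C2 lam n x - (2*lam+1) * x * C1 lam n x + real n * (real n + 2*lam) * gegenbauer n lam x
     = (\<Sum>k\<le>n. Ak lam n k * (real (n-2*k) * real (n-2*k-1) * 4 * y^(n-2*k-2)) * (1 - (y/2)^2)
    - (2*lam+1)*(y/2)*(Ak lam n k * (real (n-2*k)*2*y^(n-2*k-1)))
    + real n*(real n+2*lam)*(Ak lam n k * y^(n-2*k)))"
    unfolding C1_def C2_def geg_sum[OF order_refl] x
    by (simp add: sum.distrib sum_subtractf sum_distrib_left sum_distrib_right y_def mult_ac)
  also have "\<dots> = (\<Sum>k\<le>n. - V (Suc k) + V k)"
    by (rule sum.cong[OF refl]) (simp only: ode_term ode_UV V_def)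
  also have "\<dots> = 0"
  proof -
    have "V 0 = 0" "V (Suc n) = 0" by (simp_all add: V_def Ak_def)
    then have "(\<Sum>k\<le>n. V (Suc k)) = (\<Sum>k\<le>n. V k)"
      using sum.atMost_Suc_shift[of V n] by simp
    then show ?thesis by (simp add: sum_subtractf)
  qed
  finally show ?thesis .
qed

lemma cont_geg: "continuous_on S (gegenbauer n lam)"
  by (rule continuous_at_imp_continuous_on) (metis DERIV_isCont deriv_geg)

lemma cont_C1: "continuous_on S (C1 lam n)"
  by (rule continuous_at_imp_continuous_on) (metis DERIV_isCont deriv_C1)

lemma deriv_sqrt1: 
  assumes "x \<in> {-1<..<1::real}"
  shows "((\<lambda>x. sqrt (1 - x^2)) has_real_derivative (- x / sqrt (1 - x^2))) (at x)"
proof -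
  have pos: "1 - x^2 > 0" using assms by (simp add: abs_square_less_1 abs_less_iff)
  have "((\<lambda>x. 1 - x^2) has_real_derivative (- 2 * x)) (at x)"
    by (auto intro!: derivative_eq_intros)
  from DERIV_chain2[OF DERIV_real_sqrt[OF pos] this] show ?thesis
    by (simp add: divide_simps)
qed

lemma deriv_p:
  assumes "x \<in> {-1<..<1::real}" and "d \<ge> 2"
  shows "((\<lambda>x. sqrt (1 - x^2) ^ d) has_real_derivative (- real d * x * sqrt (1 - x^2) ^ (d-2))) (at x)"
proof -
  have pos: "sqrt (1 - x^2) > 0" using assms by (simp add: abs_square_less_1 abs_less_iff)
  from DERIV_power[OF deriv_sqrt1[OF assms(1)], of d]
  have "((\<lambda>x. sqrt (1 - x^2) ^ d) has_real_derivative real d * (- x / sqrt (1 - x^2) * sqrt (1 - x^2) ^ (d - 1))) (at x)" by simp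
  moreover have "sqrt (1 - x^2) ^ (d - 1) = sqrt (1 - x^2) * sqrt (1 - x^2) ^ (d-2)"
    using assms(2) by (metis Suc_diff_Suc Suc_1 Suc_le_lessD power_Suc diff_Suc_1)
  ultimately show ?thesis using pos by (simp add: field_simps)
qed

lemma geg_orth:
  assumes d: "d \<ge> 2" and mn: "m \<noteq> n"
  shows "((\<lambda>x. sqrt (1 - x^2) ^ (d-2) * gegenbauer n ((real d - 1)/2) x * gegenbauer m ((real d - 1)/2) x)
          has_integral 0) {-1..1}"
proof -
  define lam where "lam = (real d - 1)/2"
  define C where "C k = gegenbauer k lam" for k
  define D where "D k = C1 lam k" for k
  define E where "E k = C2 lam k" for k
  define w where "w x = sqrt (1 - x^2) ^ (d-2)" for x :: real
  define F where "F x = sqrt (1 - x^2) ^ d * (D n x * C m x - D m x * C n x)" for x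
  define K where "K = real m * (real m + real d - 1) - real n * (real n + real d - 1)"
  have ode: "(1 - x^2) * E k x = real d * x * D k x - real k * (real k + real d - 1) * C k x" for k x
  proof -
    have l1: "2*lam+1 = real d" and l2: "real k + 2*lam = real k + real d - 1" by (simp_all add: lam_def field_simps)
    show ?thesis using geg_ode[of x lam k, unfolded l1 l2] unfolding C_def D_def E_def by linarith
  qed
  have derF: "(F has_real_derivative (K * (w x * C n x * C m x))) (at x)" if x: "x \<in> {-1<..<1}" for x
  proof -
    have "(F has_real_derivative
        (- real d * x * w x) * (D n x * C m x - D m x * C n x)
        + ((E n x * C m x + D m x * D n x) - (E m x * C n x + D n x * D m x)) * sqrt (1 - x^2) ^ d) (at x)"
      unfolding F_def w_def D_def C_def E_def
      by (intro DERIV_mult DERIV_diff deriv_p x d deriv_geg deriv_C1)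
    moreover have "sqrt (1 - x^2) ^ d = (1 - x^2) * w x"
    proof -
      have "1 - x^2 \<ge> 0" using x abs_square_le_1[of x] by (auto simp: abs_le_iff)
      then have "sqrt (1 - x^2) ^ 2 = 1 - x^2" by simp
      moreover have "d = 2 + (d - 2)" using d by simp
      ultimately show ?thesis unfolding w_def by (metis power_add)
    qed
    ultimately have "(F has_real_derivative
        (- real d * x * w x) * (D n x * C m x - D m x * C n x)
        + w x * (((1 - x^2) * E n x) * C m x - ((1 - x^2) * E m x) * C n x)) (at x)"
      by (simp add: algebra_simps)
    then show ?thesis unfolding ode K_def by (simp add: algebra_simps)
  qed
  have contF: "continuous_on {-1..1} F"
    unfolding F_def D_def C_def
    by (intro continuous_intros cont_geg cont_C1)
  have "((\<lambda>x. K * (w x * C n x * C m x)) has_integral (F 1 - F (-1))) {-1..1}"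
    by (rule fundamental_theorem_of_calculus_interior)
       (use contF derF in \<open>auto simp: has_real_derivative_iff_has_vector_derivative[symmetric]\<close>)
  moreover have "F 1 = 0" "F (-1) = 0" unfolding F_def using d by simp_all
  ultimately have I: "((\<lambda>x. K * (w x * C n x * C m x)) has_integral 0) {-1..1}" by simp
  have "K \<noteq> 0"
  proof
    assume "K = 0"
    then have "(real m - real n) * (real m + real n + real d - 1) = 0" unfolding K_def by (simp add: algebra_simps)
    moreover have "real m + real n + real d - 1 > 0" using d by simp
    ultimately have "real m = real n" by simp
    with mn show False by simp
  qed
  from has_integral_cmul[OF I, of "1/K"] this show ?thesis
    unfolding w_def C_def lam_def by simp
qed

lemma int_w:
  assumes d: "d \<ge> 2"
  shows "((\<lambda>x. sqrt (1 - x^2) ^ (d-2)) has_integral (sphere_area d / sphere_area (d - 1))) {-1..1}"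
proof -
  define w where "w x = sqrt (1 - x^2) ^ (d-2)" for x :: real
  have cw: "continuous_on {-1..1} w" unfolding w_def by (intro continuous_intros)
  have hi: "(w has_integral integral {-1..1} w) {-1..1}"
    using integrable_continuous_interval[OF cw] by (simp add: has_integral_integral)
  have nn: "\<And>x. x \<in> {-1..1} \<Longrightarrow> 0 \<le> w x" unfolding w_def
    by (intro zero_le_power real_sqrt_ge_zero) (use abs_square_le_1 in \<open>auto simp: abs_le_iff\<close>)
  from nn_integral_has_integral_lebesgue[OF nn hi]
  have "(\<integral>\<^sup>+x. indicator {-1..1} x * w x \<partial>lborel) = ennreal (integral {-1..1} w)" by simp
  moreover have "(\<integral>\<^sup>+x. indicator {-1..1} x * w x \<partial>lborel) = ennreal (Beta (1 / 2) (real (d-2) / 2 + 1))"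
    unfolding w_def by (rule emeasure_cball_aux_integral)
  ultimately have "ennreal (integral {-1..1} w) = ennreal (Beta (1 / 2) (real (d-2) / 2 + 1))" by simp
  moreover have "integral {-1..1} w \<ge> 0" using nn by (intro integral_nonneg integrable_continuous_interval[OF cw]) auto
  moreover have b: "Beta (1 / 2) (real (d-2) / 2 + 1) = sqrt pi * Gamma (real d / 2) / Gamma ((real d + 1) / 2)"
  proof -
    have e1: "real (d-2) / 2 + 1 = real d / 2" using d by (simp add: field_simps of_nat_diff)
    have e2: "1/2 + real d / 2 = (real d + 1)/2" by (simp add: field_simps)
    show ?thesis by (simp only: Beta_def e1 e2 Gamma_one_half_real)
  qed
  moreover have "Beta (1 / 2) (real (d-2) / 2 + 1) \<ge> 0"
    unfolding b using d by (intro divide_nonneg_nonneg mult_nonneg_nonneg) (auto intro: less_imp_le Gamma_real_pos)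
  ultimately have I: "integral {-1..1} w = sqrt pi * Gamma (real d / 2) / Gamma ((real d + 1) / 2)"
    by simp
  have "sphere_area d / sphere_area (d - 1) = sqrt pi * Gamma (real d / 2) / Gamma ((real d + 1) / 2)"
  proof -
    have e: "(real (d - 1) + 1) / 2 = real d / 2" using d by (simp add: of_nat_diff)
    have p: "pi powr ((real d + 1) / 2) = pi powr (real d / 2) * sqrt pi"
      by (simp add: powr_add[symmetric] powr_half_sqrt[symmetric] add_divide_distrib)
    have g: "Gamma (real d / 2) > 0" "Gamma ((real d + 1) / 2) > 0" using d by (auto intro: Gamma_real_pos)
    have "pi powr (real d / 2) > 0" by simp
    then show ?thesis unfolding sphere_area_def e p using g by (simp add: field_simps)
  qed
  then show ?thesis using hi I unfolding w_def by simp
qed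

definition al :: "nat \<Rightarrow> nat \<Rightarrow> real" where
  "al d l = (real l + 1) / (real d + 2 * real l + 1)"
definition be :: "nat \<Rightarrow> nat \<Rightarrow> real" where
  "be d l = (real l + real d - 2) / (2 * real l + real d - 3)"

lemma Q0: "d \<ge> 2 \<Longrightarrow> Q_poly d 0 x = 1"
  by (simp add: Q_poly_def)

lemma xQ0: assumes d: "d \<ge> 2" shows "x * Q_poly d 0 x = al d 0 * Q_poly d 1 x"
proof -
  have d1: "real d - 1 \<noteq> 0" "real d + 1 \<noteq> 0" using d by simp_all
  have "Q_poly d 1 x = (real d + 1) * x"
    unfolding Q_poly_def geg_1 using d1 by (simp add: field_simps)
  then show ?thesis using d1 Q0[OF d] by (simp add: al_def)
qed

lemma xQSuc:
  assumes d: "d \<ge> 2"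
  shows "x * Q_poly d (Suc n) x = al d (Suc n) * Q_poly d (Suc (Suc n)) x + be d (Suc n) * Q_poly d n x"
proof -
  define G where "G k = gegenbauer k ((real d - 1)/2) x" for k
  have r: "real (n+2) * G (n+2) = (2 * real n + real d + 1) * x * G (n+1) - (real n + real d - 1) * G n"
    using geg_rec[of n "(real d - 1)/2" x] unfolding G_def by (simp add: field_simps)
  have d1: "real d - 1 > 0" using d by simp
  have n1: "2 * real n + real d - 1 > 0" "real d + 2 * real n + 3 > 0" "2 * real n + real d + 1 > 0" using d by simp_all
  have xG: "x * G (n+1) = (real (n+2) * G (n+2) + (real n + real d - 1) * G n) / (2 * real n + real d + 1)"
    using r n1 by (simp add: field_simps)
  have rhs: "al d (Suc n) * Q_poly d (Suc (Suc n)) x + be d (Suc n) * Q_poly d n x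
     = (real (n+2) * G (n+2) + (real n + real d - 1) * G n) / (real d - 1)"
  proof -
    have canc: "B \<noteq> 0 \<Longrightarrow> a / B * (B / D * g) = a * g / D" for a B D g :: real by simp
    have "al d (Suc n) = real (n+2) / (real d + 2 * real n + 3)" by (simp add: al_def algebra_simps)
    moreover have "Q_poly d (Suc (Suc n)) x = (real d + 2 * real n + 3) / (real d - 1) * G (n+2)"
      unfolding Q_poly_def G_def by (simp add: algebra_simps)
    ultimately have 1: "al d (Suc n) * Q_poly d (Suc (Suc n)) x = real (n+2) * G (n+2) / (real d - 1)"
      using canc n1 by simp
    have "be d (Suc n) = (real n + real d - 1) / (2 * real n + real d - 1)" by (simp add: be_def algebra_simps)
    moreover have "Q_poly d n x = (2 * real n + real d - 1) / (real d - 1) * G n"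
      unfolding Q_poly_def G_def by (simp add: algebra_simps)
    ultimately have 2: "be d (Suc n) * Q_poly d n x = (real n + real d - 1) * G n / (real d - 1)"
      using canc n1 by simp
    show ?thesis using 1 2 by (simp add: add_divide_distrib)
  qed
  have lhs: "x * Q_poly d (Suc n) x = (2 * real n + real d + 1) * (x * G (n+1)) / (real d - 1)"
    unfolding Q_poly_def G_def by (simp add: algebra_simps)
  show ?thesis unfolding lhs rhs xG using n1 by simp
qed

definition wt :: "nat \<Rightarrow> real \<Rightarrow> real" where
  "wt d x = sqrt (1 - x^2) ^ (d-2)"

definition qn :: "nat \<Rightarrow> nat \<Rightarrow> real" where
  "qn d j = integral {-1..1} (\<lambda>x. wt d x * Q_poly d j x * Q_poly d j x)"

lemma cont_Q: "continuous_on S (Q_poly d l)"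
proof -
  have "Q_poly d l = (\<lambda>x. (real d + 2 * real l - 1) / (real d - 1) * gegenbauer l ((real d - 1) / 2) x)"
    by (rule ext) (simp add: Q_poly_def)
  moreover have "continuous_on S (\<lambda>x. (real d + 2 * real l - 1) / (real d - 1) * gegenbauer l ((real d - 1) / 2) x)"
    by (intro continuous_on_mult_left cont_geg)
  ultimately show ?thesis by simp
qed

lemma cont_wt: "continuous_on S (wt d)"
  unfolding wt_def by (intro continuous_intros)

lemma QQ:
  assumes d: "d \<ge> 2"
  shows "((\<lambda>x. wt d x * Q_poly d j x * Q_poly d k x) has_integral (if j = k then qn d j else 0)) {-1..1}"
proof (cases "j = k")
  case True
  have "continuous_on {-1..1} (\<lambda>x. wt d x * Q_poly d j x * Q_poly d j x)"
    by (intro continuous_intros cont_wt cont_Q)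
  from integrable_continuous_interval[OF this] show ?thesis
    using True unfolding qn_def by (simp add: has_integral_integral)
next
  case False
  define cj where "cj = (real d + 2 * real j - 1) / (real d - 1)"
  define ck where "ck = (real d + 2 * real k - 1) / (real d - 1)"
  from has_integral_cmul[OF geg_orth[OF d False[symmetric]], of "cj*ck"]
  have "((\<lambda>x. cj * ck * (sqrt (1 - x\<^sup>2) ^ (d - 2) * gegenbauer j ((real d - 1) / 2) x *
       gegenbauer k ((real d - 1) / 2) x)) has_integral 0) {-1..1}" by simp
  moreover have "(\<lambda>x. cj * ck * (sqrt (1 - x\<^sup>2) ^ (d - 2) * gegenbauer j ((real d - 1) / 2) x *
       gegenbauer k ((real d - 1) / 2) x)) = (\<lambda>x. wt d x * Q_poly d j x * Q_poly d k x)"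
    unfolding wt_def Q_poly_def cj_def ck_def by (simp add: fun_eq_iff mult_ac)
  ultimately show ?thesis using False by simp
qed

lemma expand:
  assumes d: "d \<ge> 2"
  shows "((\<lambda>x. wt d x * (\<Sum>j\<le>N. a j * Q_poly d j x) * (\<Sum>k\<le>N. b k * Q_poly d k x))
     has_integral (\<Sum>j\<le>N. a j * b j * qn d j)) {-1..1}"
proof -
  have eq: "(\<lambda>x. wt d x * (\<Sum>j\<le>N. a j * Q_poly d j x) * (\<Sum>k\<le>N. b k * Q_poly d k x))
    = (\<lambda>x. \<Sum>j\<le>N. \<Sum>k\<le>N. a j * b k * (wt d x * Q_poly d j x * Q_poly d k x))"
    by (simp add: fun_eq_iff sum_product sum_distrib_left mult_ac)
  have "((\<lambda>x. \<Sum>j\<le>N. \<Sum>k\<le>N. a j * b k * (wt d x * Q_poly d j x * Q_poly d k x))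
     has_integral (\<Sum>j\<le>N. \<Sum>k\<le>N. a j * b k * (if j = k then qn d j else 0))) {-1..1}"
    by (intro has_integral_sum finite_atMost has_integral_mult_right QQ d)
  moreover have "(\<Sum>j\<le>N. \<Sum>k\<le>N. a j * b k * (if j = k then qn d j else 0)) = (\<Sum>j\<le>N. a j * b j * qn d j)"
  proof (rule sum.cong[OF refl])
    fix j assume j: "j \<in> {..N}"
    have "(\<Sum>k\<le>N. a j * b k * (if j = k then qn d j else 0)) = (\<Sum>k\<le>N. if j = k then a j * b j * qn d j else 0)"
      by (rule sum.cong) auto
    also have "\<dots> = a j * b j * qn d j" using j by (simp add: sum.delta)
    finally show "(\<Sum>k\<le>N. a j * b k * (if j = k then qn d j else 0)) = a j * b j * qn d j" .
  qed
  ultimately show ?thesis unfolding eq by simp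
qed

lemma lin2:
  assumes d: "d \<ge> 2"
  shows "((\<lambda>x. wt d x * (a * Q_poly d j x + b * Q_poly d k x) * Q_poly d m x) has_integral
      (a * (if j = m then qn d j else 0) + b * (if k = m then qn d k else 0))) {-1..1}"
proof -
  have "((\<lambda>x. a * (wt d x * Q_poly d j x * Q_poly d m x) + b * (wt d x * Q_poly d k x * Q_poly d m x)) has_integral
      (a * (if j = m then qn d j else 0) + b * (if k = m then qn d k else 0))) {-1..1}"
    by (intro has_integral_add has_integral_mult_right QQ d)
  moreover have "(\<lambda>x. a * (wt d x * Q_poly d j x * Q_poly d m x) + b * (wt d x * Q_poly d k x * Q_poly d m x))
     = (\<lambda>x. wt d x * (a * Q_poly d j x + b * Q_poly d k x) * Q_poly d m x)"
    by (simp add: fun_eq_iff algebra_simps)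
  ultimately show ?thesis by simp
qed

lemma qn_rec:
  assumes d: "d \<ge> 2"
  shows "al d l * qn d (Suc l) = be d (Suc l) * qn d l"
proof -
  define f where "f x = wt d x * (x * Q_poly d l x) * Q_poly d (Suc l) x" for x
  have 1: "(f has_integral al d l * qn d (Suc l)) {-1..1}"
  proof (cases l)
    case 0
    have "f = (\<lambda>x. wt d x * (al d 0 * Q_poly d 1 x + 0 * Q_poly d 1 x) * Q_poly d 1 x)"
      unfolding f_def 0 using xQ0[OF d] by (simp add: fun_eq_iff)
    then show ?thesis using lin2[OF d, of "al d 0" 1 0 1 1] 0 by simp
  next
    case (Suc n)
    have "f = (\<lambda>x. wt d x * (al d (Suc n) * Q_poly d (Suc (Suc n)) x + be d (Suc n) * Q_poly d n x) * Q_poly d (Suc (Suc n)) x)"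
      unfolding f_def Suc using xQSuc[OF d] by (simp add: fun_eq_iff)
    then show ?thesis using lin2[OF d, of "al d (Suc n)" "Suc (Suc n)" "be d (Suc n)" n "Suc (Suc n)"] Suc by simp
  qed
  have 2: "(f has_integral be d (Suc l) * qn d l) {-1..1}"
  proof -
    have "f = (\<lambda>x. wt d x * (al d (Suc l) * Q_poly d (Suc (Suc l)) x + be d (Suc l) * Q_poly d l x) * Q_poly d l x)"
      unfolding f_def using xQSuc[OF d, of _ l] by (simp add: fun_eq_iff mult_ac)
    then show ?thesis using lin2[OF d, of "al d (Suc l)" "Suc (Suc l)" "be d (Suc l)" l l] by simp
  qed
  from has_integral_unique[OF 1 2] show ?thesis .
qed

lemma qn0:
  assumes d: "d \<ge> 2"
  shows "qn d 0 = sphere_area d / sphere_area (d - 1)"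
proof -
  have "(\<lambda>x. wt d x * Q_poly d 0 x * Q_poly d 0 x) = (\<lambda>x. sqrt (1 - x^2) ^ (d-2))"
    by (simp add: fun_eq_iff wt_def Q0[OF d])
  then show ?thesis unfolding qn_def using int_w[OF d] by (simp add: integral_unique)
qed

definition bb :: "nat \<Rightarrow> nat \<Rightarrow> real" where
  "bb d l = real ((d + l - 1) choose l)"

definition rr :: "nat \<Rightarrow> nat \<Rightarrow> real" where
  "rr d l = (real d + 2 * real l - 1) / (real d + real l - 1) * bb d l"

lemma bb_rec:
  assumes d: "d \<ge> 1"
  shows "real (Suc l) * bb d (Suc l) = (real d + real l) * bb d l"
proof -
  obtain e where e: "d + l - 1 = e" "d + l = Suc e" using d by (metis add_gr_0 Suc_diff_1 less_le_trans zero_less_one)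
  have s: "d + Suc l - 1 = Suc e" using e by simp
  have "(Suc e choose Suc l) * Suc l = Suc e * (e choose l)" by (rule Suc_times_binomial_eq[symmetric])
  then have "real ((Suc e choose Suc l) * Suc l) = real (Suc e * (e choose l))" by (rule arg_cong)
  then have "real (Suc e choose Suc l) * real (Suc l) = real (Suc e) * real (e choose l)"
    by (simp only: of_nat_mult)
  moreover have "real (Suc e) = real d + real l" using e(2) by (metis of_nat_add)
  ultimately show ?thesis unfolding bb_def s e(1) by (simp only: mult.commute)
qed

lemma bb0: "bb d 0 = 1" by (simp add: bb_def)

lemma qn_closed:
  assumes d: "d \<ge> 2"
  shows "qn d l = sphere_area d / sphere_area (d - 1) * rr d l"
proof (induction l)
  case 0
  have "rr d 0 = 1" using d by (simp add: rr_def bb0)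
  then show ?case using qn0[OF d] by simp
next
  case (Suc l)
  have d1: "real d - 1 > 0" using d by simp
  have a1: "al d l * rr d (Suc l) = bb d l"
  proof -
    have canc: "B \<noteq> 0 \<Longrightarrow> a / B * (B / D * g) = a * g / D" for a B D g :: real by simp
    have r: "rr d (Suc l) = (real d + 2*real l + 1)/(real d + real l) * bb d (Suc l)"
      by (simp add: rr_def algebra_simps)
    have "al d l * rr d (Suc l) = real (Suc l) * bb d (Suc l) / (real d + real l)"
      unfolding al_def r using d1 canc[of "real d + 2*real l + 1"] by (simp add: add.commute)
    also have "\<dots> = bb d l" using bb_rec[of d l] d d1 by simp
    finally show ?thesis .
  qed
  have b1: "be d (Suc l) * rr d l = bb d l"
  proof -
    have "be d (Suc l) = (real d + real l - 1)/(real d + 2 * real l - 1)"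
      by (simp add: be_def algebra_simps)
    moreover have "real d + real l - 1 \<noteq> 0" "real d + 2 * real l - 1 \<noteq> 0" using d1 by linarith+
    ultimately show ?thesis unfolding rr_def by simp
  qed
  have "al d l * qn d (Suc l) = al d l * (sphere_area d / sphere_area (d - 1) * rr d (Suc l))"
    using qn_rec[OF d, of l] Suc b1 a1 by (simp add: mult_ac)
  moreover have "al d l \<noteq> 0" unfolding al_def using d1 by (simp add: field_simps)
  ultimately show ?case by (metis mult_left_cancel)
qed

lemma R_Suc: "R_poly d (Suc M) x = R_poly d M x + Q_poly d (Suc M) x"
  by (simp add: R_poly_def)

lemma xR:
  assumes d: "d \<ge> 2"
  shows "x * R_poly d (Suc M) x = R_poly d M x + al d M * Q_poly d (Suc M) x + al d (Suc M) * Q_poly d (Suc (Suc M)) x"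
proof (induction M)
  case 0
  have "be d 1 = 1" using d by (simp add: be_def)
  then have "x * Q_poly d 1 x = al d 1 * Q_poly d 2 x + Q_poly d 0 x"
    using xQSuc[OF d, of x 0] by (simp add: numeral_2_eq_2)
  then show ?case using xQ0[OF d, of x] by (simp add: R_poly_def algebra_simps numeral_2_eq_2)
next
  case (Suc M)
  have s: "al d M + be d (Suc (Suc M)) = 1"
  proof -
    have p: "real d + 2 * real M + 1 > 0" using d by simp
    have "be d (Suc (Suc M)) = (real d + real M) / (real d + 2 * real M + 1)"
      by (simp add: be_def algebra_simps)
    then show ?thesis unfolding al_def using p by (simp add: field_simps)
  qed
  have "x * R_poly d (Suc (Suc M)) x = x * R_poly d (Suc M) x + x * Q_poly d (Suc (Suc M)) x"
    by (simp add: R_Suc[of d "Suc M"] algebra_simps)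
  also have "\<dots> = R_poly d M x + (al d M + be d (Suc (Suc M))) * Q_poly d (Suc M) x
      + al d (Suc M) * Q_poly d (Suc (Suc M)) x + al d (Suc (Suc M)) * Q_poly d (Suc (Suc (Suc M))) x"
    unfolding Suc xQSuc[OF d, of x "Suc M"] by (simp add: algebra_simps)
  also have "\<dots> = R_poly d (Suc M) x + al d (Suc M) * Q_poly d (Suc (Suc M)) x
      + al d (Suc (Suc M)) * Q_poly d (Suc (Suc (Suc M))) x"
    unfolding s R_Suc by simp
  finally show ?case .
qed

lemma sum_rr:
  assumes d: "d \<ge> 2"
  shows "(\<Sum>l\<le>L. rr d l) = bb d L * (real d + 2 * real L) / real d"
proof (induction L)
  case 0
  then show ?case using d by (simp add: rr_def bb0)
next
  case (Suc L)
  have d0: "real d > 0" using d by simp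
  have bS: "bb d (Suc L) = (real d + real L) / (real L + 1) * bb d L"
    using bb_rec[of d L] d by (simp add: field_simps)
  have rS: "rr d (Suc L) = (real d + 2 * real L + 1) / (real L + 1) * bb d L"
  proof -
    have B: "real d + real L \<noteq> 0" using d0 by linarith
    have canc: "B \<noteq> 0 \<Longrightarrow> A / B * (B / D * g) = A / D * g" for A B D g :: real by simp
    have e: "real d + 2 * real (Suc L) - 1 = real d + 2 * real L + 1" "real d + real (Suc L) - 1 = real d + real L"
      by simp_all
    show ?thesis unfolding rr_def bS e by (rule canc[OF B])
  qed
  show ?case unfolding sum.atMost_Suc Suc rS bS using d0
    by (simp add: field_simps)
qed

lemma binom1:
  assumes d: "d \<ge> 1"
  shows "d * ((d + L) choose d) = (d + L) * ((d + L - 1) choose L)"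
proof -
  have "(d + L) choose d = (d + L) choose L"
    using binomial_symmetric[of d "d+L"] by simp
  moreover have "(d + L - L) * ((d + L) choose L) = (d + L) * ((d + L - 1) choose L)"
    by (rule binomial_absorb_comp)
  ultimately show ?thesis by simp
qed

lemma binom2:
  assumes d: "d \<ge> 1"
  shows "d * ((d + L - 1) choose d) = L * ((d + L - 1) choose L)"
proof (cases L)
  case 0
  then show ?thesis using d by simp
next
  case (Suc M)
  obtain e where e: "d = Suc e" using d by (cases d) auto
  have "d * ((d + L - 1) choose d) = Suc e * ((e + Suc M) choose Suc e)" using e Suc by simp
  also have "\<dots> = (e + Suc M) * ((e + M) choose e)"
    using binomial_absorption[of e "e + Suc M"] by simp
  also have "(e + M) choose e = (e + M) choose M"
    using binomial_symmetric[of e "e+M"] by simp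
  also have "(e + Suc M) * ((e + M) choose M) = Suc M * ((e + Suc M) choose Suc M)"
    using binomial_absorption[of M "e + Suc M"] by simp
  finally show ?thesis using e Suc by simp
qed

lemma alrr:
  assumes d: "d \<ge> 2"
  shows "al d l ^ 2 * rr d (Suc l) = (real l + 1) / (real d + 2 * real l + 1) * bb d l"
proof -
  have p: "real d + 2 * real l + 1 \<noteq> 0" "real d + real l \<noteq> 0" using d by simp_all
  have h: "A \<noteq> 0 \<Longrightarrow> B \<noteq> 0 \<Longrightarrow> (a/A)^2 * (A/B * g) = a/A*(a*g/B)" for a A B g :: real
    by (simp add: power2_eq_square)
  have r: "rr d (Suc l) = (real d + 2 * real l + 1) / (real d + real l) * bb d (Suc l)"
    by (simp add: rr_def algebra_simps)
  have "al d l ^ 2 * rr d (Suc l) = (real l + 1) / (real d + 2 * real l + 1) * ((real l + 1) * bb d (Suc l) / (real d + real l))"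
    unfolding r al_def by (rule h[OF p])
  also have "(real l + 1) * bb d (Suc l) = (real d + real l) * bb d l"
    using bb_rec[of d l] d by (simp add: add.commute)
  finally show ?thesis using p(2) by simp
qed

lemma alg2:
  fixes D m b A B C E :: real
  assumes h: "A = D+2*m+1" "B = D+2*m+3" "C = m+1" "E = D+m" and p: "D>0" "m\<ge>0"
  shows "b*(D+2*m)/D + C/A*b + (m+2)/B*(E/C*b) = (D*(C+1)/(C*B) + (D+4*C-2)/A) * (C*(E/C*b)/D)"
proof -
  have nz: "A\<noteq>0" "B\<noteq>0" "C\<noteq>0" "D\<noteq>0" using h p by auto
  show ?thesis using nz
    apply (simp add: field_simps)
    apply (simp add: h algebra_simps)
    done
qed

lemma final2:
  assumes d: "d \<ge> 2"
  shows "bb d M * (real d + 2 * real M) / real d + al d M ^ 2 * rr d (Suc M) + al d (Suc M) ^ 2 * rr d (Suc (Suc M))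
    = (real d * (real (Suc M) + 1) / (real (Suc M) * (real d + 2 * real (Suc M) + 1))
                + (real d + 4 * real (Suc M) - 2) / (real d + 2 * real (Suc M) - 1)) * (real (Suc M) * bb d (Suc M) / real d)"
proof -
  have bS: "bb d (Suc M) = (real d + real M) / (real M + 1) * bb d M"
    using bb_rec[of d M] d by (simp add: field_simps)
  have a2: "al d (Suc M) ^ 2 * rr d (Suc (Suc M)) = (real M + 2) / (real d + 2 * real M + 3) * bb d (Suc M)"
    using alrr[OF d, of "Suc M"] by (simp add: algebra_simps)
  define A where "A = real d + 2 * real M + 1"
  define B where "B = real d + 2 * real M + 3"
  define C where "C = real M + 1"
  define E where "E = real d + real M"
  have h1: "real (Suc M) = C" unfolding C_def by simp
  have h2: "real d + 2 * C + 1 = B" "real d + 2 * C - 1 = A" unfolding A_def B_def C_def by simp_all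
  have hc: "C \<noteq> 0" "real M + 2 = C + 1" unfolding C_def by simp_all
  have "real d > 0" using d by simp
  from alg2[OF A_def B_def C_def E_def this, of "bb d M"]
  show ?thesis
    unfolding alrr[OF d] a2 bS h1 h2 A_def[symmetric] B_def[symmetric] C_def[symmetric] E_def[symmetric]
    using hc by simp
qed

lemma wconv:
  assumes d: "d \<ge> 2" and t: "t \<in> {-1..1} - {-1,1::real}"
  shows "(1 - t^2) powr (real d / 2 - 1) = wt d t"
proof -
  have "\<bar>t\<bar> < 1" using t by auto
  then have a: "1 - t^2 > 0" by (simp add: abs_square_less_1)
  have "wt d t = sqrt (1 - t^2) powr real (d-2)"
    unfolding wt_def using a by (simp add: powr_realpow)
  also have "\<dots> = ((1 - t^2) powr (1/2)) powr real (d-2)" using a by (simp add: powr_half_sqrt)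
  also have "\<dots> = (1 - t^2) powr (real d / 2 - 1)"
    unfolding powr_powr using d by (simp add: of_nat_diff field_simps)
  finally show ?thesis by simp
qed

theorem lemma2:
  fixes d L :: nat
  assumes "d \<ge> 2" and "L \<ge> 1"
  shows "(integral {-1..1} (\<lambda>t. (R_poly d L t)^2 * (1 - t^2) powr (real d / 2 - 1))
           = sphere_area d / sphere_area (d - 1)
             * (real ((d + L) choose d) + real ((d + L - 1) choose d)))
       \<and> (integral {-1..1} (\<lambda>t. (R_poly d L t)^2 * t^2 * (1 - t^2) powr (real d / 2 - 1))
           = sphere_area d / sphere_area (d - 1)
             * (real d * (real L + 1) / (real L * (real d + 2 * real L + 1))
                + (real d + 4 * real L - 2) / (real d + 2 * real L - 1))
             * real ((d + L - 1) choose d))"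
proof
  have d: "d \<ge> 2" by fact
  define c where "c = sphere_area d / sphere_area (d - 1)"
  have negl: "negligible {-1, 1::real}" by auto
  have d0: "real d > 0" using d by simp
  have B2: "real ((d + L - 1) choose d) = real L * bb d L / real d"
  proof -
    have "real d * real ((d + L - 1) choose d) = real L * bb d L"
      unfolding bb_def using binom2[of d L] d by (metis of_nat_mult one_le_numeral order_trans)
    then show ?thesis using d0 by (simp add: field_simps)
  qed
  have B1: "real ((d + L) choose d) = (real d + real L) * bb d L / real d"
  proof -
    have "real d * real ((d + L) choose d) = (real d + real L) * bb d L"
      unfolding bb_def using binom1[of d L] d by (metis of_nat_add of_nat_mult one_le_numeral order_trans)
    then show ?thesis using d0 by (simp add: field_simps)
  qed
  show "integral {-1..1} (\<lambda>t. (R_poly d L t)^2 * (1 - t^2) powr (real d / 2 - 1))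
           = sphere_area d / sphere_area (d - 1)
             * (real ((d + L) choose d) + real ((d + L - 1) choose d))"
  proof -
    have "integral {-1..1} (\<lambda>t. (R_poly d L t)^2 * (1 - t^2) powr (real d / 2 - 1))
        = integral {-1..1} (\<lambda>t. wt d t * (\<Sum>j\<le>L. 1 * Q_poly d j t) * (\<Sum>k\<le>L. 1 * Q_poly d k t))"
    proof (rule integral_spike[OF negl])
      fix t assume t: "t \<in> {-1..1} - {-1, 1::real}"
      show "wt d t * (\<Sum>j\<le>L. 1 * Q_poly d j t) * (\<Sum>k\<le>L. 1 * Q_poly d k t)
          = (R_poly d L t)^2 * (1 - t^2) powr (real d / 2 - 1)"
        unfolding wconv[OF d t] by (simp add: R_poly_def power2_eq_square mult_ac)
    qed
    also have "\<dots> = (\<Sum>j\<le>L. 1 * 1 * qn d j)"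
      by (rule integral_unique[OF expand[OF d]])
    also have "\<dots> = c * (\<Sum>j\<le>L. rr d j)"
      by (simp add: qn_closed[OF d] c_def sum_distrib_left)
    also have "\<dots> = c * (bb d L * (real d + 2 * real L) / real d)"
      by (simp add: sum_rr[OF d])
    also have "\<dots> = c * (real ((d + L) choose d) + real ((d + L - 1) choose d))"
      unfolding B1 B2 by (simp add: add_divide_distrib[symmetric] algebra_simps)
    finally show ?thesis unfolding c_def .
  qed
  obtain M where L: "L = Suc M" using assms(2) by (cases L) auto
  define cf where "cf j = (if j \<le> M then 1 else if j = Suc M then al d M else al d (Suc M))" for j
  have xRs: "t * R_poly d L t = (\<Sum>j\<le>Suc (Suc M). cf j * Q_poly d j t)" for t
  proof -
    have "(\<Sum>j\<le>M. cf j * Q_poly d j t) = R_poly d M t"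
      unfolding R_poly_def cf_def by (rule sum.cong) auto
    then show ?thesis unfolding L xR[OF d] by (simp add: cf_def)
  qed
  show "integral {-1..1} (\<lambda>t. (R_poly d L t)^2 * t^2 * (1 - t^2) powr (real d / 2 - 1))
           = sphere_area d / sphere_area (d - 1)
             * (real d * (real L + 1) / (real L * (real d + 2 * real L + 1))
                + (real d + 4 * real L - 2) / (real d + 2 * real L - 1))
             * real ((d + L - 1) choose d)"
  proof -
    have "integral {-1..1} (\<lambda>t. (R_poly d L t)^2 * t^2 * (1 - t^2) powr (real d / 2 - 1))
        = integral {-1..1} (\<lambda>t. wt d t * (\<Sum>j\<le>Suc (Suc M). cf j * Q_poly d j t) * (\<Sum>k\<le>Suc (Suc M). cf k * Q_poly d k t))"
    proof (rule integral_spike[OF negl])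
      fix t assume t: "t \<in> {-1..1} - {-1, 1::real}"
      show "wt d t * (\<Sum>j\<le>Suc (Suc M). cf j * Q_poly d j t) * (\<Sum>k\<le>Suc (Suc M). cf k * Q_poly d k t)
          = (R_poly d L t)^2 * t^2 * (1 - t^2) powr (real d / 2 - 1)"
        unfolding xRs[symmetric] wconv[OF d t] by (simp add: power2_eq_square mult_ac)
    qed
    also have "\<dots> = (\<Sum>j\<le>Suc (Suc M). cf j * cf j * qn d j)"
      by (rule integral_unique[OF expand[OF d]])
    also have "\<dots> = (\<Sum>j\<le>M. qn d j) + al d M ^ 2 * qn d (Suc M) + al d (Suc M) ^ 2 * qn d (Suc (Suc M))"
    proof -
      have "(\<Sum>j\<le>M. cf j * cf j * qn d j) = (\<Sum>j\<le>M. qn d j)"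
        unfolding cf_def by (rule sum.cong) auto
      then show ?thesis by (simp add: cf_def power2_eq_square)
    qed
    also have "\<dots> = c * (bb d M * (real d + 2 * real M) / real d + al d M ^ 2 * rr d (Suc M)
         + al d (Suc M) ^ 2 * rr d (Suc (Suc M)))"
    proof -
      have "(\<Sum>j\<le>M. qn d j) = (\<Sum>j\<le>M. c * rr d j)" by (simp add: qn_closed[OF d] c_def)
      also have "\<dots> = c * (\<Sum>j\<le>M. rr d j)" by (rule sum_distrib_left[symmetric])
      also have "\<dots> = c * (bb d M * (real d + 2 * real M) / real d)"
        by (simp only: sum_rr[OF d])
      finally have s1: "(\<Sum>j\<le>M. qn d j) = c * (bb d M * (real d + 2 * real M) / real d)" .
      show ?thesis unfolding s1 by (simp only: qn_closed[OF d] c_def[symmetric]) (simp add: algebra_simps)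
    qed
    also have "\<dots> = c * ((real d * (real L + 1) / (real L * (real d + 2 * real L + 1))
                + (real d + 4 * real L - 2) / (real d + 2 * real L - 1)) * (real L * bb d L / real d))"
      unfolding final2[OF d] L ..
    also have "\<dots> = c * (real d * (real L + 1) / (real L * (real d + 2 * real L + 1))
                + (real d + 4 * real L - 2) / (real d + 2 * real L - 1)) * real ((d + L - 1) choose d)"
      unfolding B2 by simp
    finally show ?thesis unfolding c_def .
  qed
qed


end
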